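(* Suppose hypothesis (H) holds. Then $-\infty<\lambda^*<+\infty$, and there exists $u^*\in S$ with $\lambda(u^* )=\lambda^*$.
   Context: $T,G:\mathbb{R}^n\to\mathbb{R}^n$ are continuously differentiable. $\Sigma=\{\psi\in\mathbb{R}^n\setminus\{0\}:\psi_i\ge0\ \forall i\}$. $S\subset\mathbb{R}^n$ is a nonempty open set with $\langle G(u),\psi\rangle>0$ for all $u\in S,\psi\in\Sigma$. For $u\in S$, $\lambda(u)=\inf_{\psi\in\Sigma}\langle T(u),\psi\rangle/\langle G(u),\psi\rangle$, and $\lambda^*=\sup_{u\in S}\lambda(u)$. Hypothesis (H): for every $u_0\in S$ the set $S(u_0)=\{u\in S:\lambda(u)\ge\lambda(u_0)\}$ is bounded and its closure is contained in $S$. *)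

theory Defs
  imports "HOL-Analysis.Analysis"
begin

definition C1_map :: "(real^'n \<Rightarrow> real^'n) \<Rightarrow> bool" where
  "C1_map F \<longleftrightarrow> (\<exists>F'. (\<forall>x. (F has_derivative blinfun_apply (F' x)) (at x)) \<and> continuous_on UNIV F')"

definition Sigma_cone :: "(real^'n) set" where
  "Sigma_cone = {\<psi>. \<psi> \<noteq> 0 \<and> (\<forall>i. \<psi> $ i \<ge> 0)}"

definition lam :: "(real^'n \<Rightarrow> real^'n) \<Rightarrow> (real^'n \<Rightarrow> real^'n) \<Rightarrow> real^'n \<Rightarrow> ereal" where
  "lam T G u = (INF \<psi>\<in>Sigma_cone. ereal ((T u \<bullet> \<psi>) / (G u \<bullet> \<psi>)))"

definition lam_star :: "(real^'n \<Rightarrow> real^'n) \<Rightarrow> (real^'n \<Rightarrow> real^'n) \<Rightarrow> (real^'n) set \<Rightarrow> ereal" where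
  "lam_star T G S = (SUP u\<in>S. lam T G u)"

definition hyp_H :: "(real^'n \<Rightarrow> real^'n) \<Rightarrow> (real^'n \<Rightarrow> real^'n) \<Rightarrow> (real^'n) set \<Rightarrow> bool" where
  "hyp_H T G S \<longleftrightarrow> (\<forall>u0\<in>S. bounded {u\<in>S. lam T G u \<ge> lam T G u0}
                          \<and> closure {u\<in>S. lam T G u \<ge> lam T G u0} \<subseteq> S)"

end

theory Submission imports Defs begin

lemma axis_in_cone: "axis i (1::real) \<in> Sigma_cone"
  unfolding Sigma_cone_def by (auto simp: axis_def vec_eq_iff)

lemma one_in_cone: "(1::real^'n) \<in> Sigma_cone"
  unfolding Sigma_cone_def by auto

lemma lam_lower:
  fixes T G :: "real^'n \<Rightarrow> real^'n"
  assumes pos: "\<And>\<psi>. \<psi> \<in> Sigma_cone \<Longrightarrow> G u \<bullet> \<psi> > 0"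
  shows "lam T G u > -\<infinity>"
proof -
  define m where "m = Min (range (\<lambda>i. G u $ i))"
  define M where "M = (\<Sum>j\<in>UNIV. \<bar>T u $ j\<bar>)"
  have Gi: "G u $ i > 0" for i
    using pos[OF axis_in_cone[of i]] by (simp add: inner_axis)
  have mpos: "m > 0" unfolding m_def using Gi by (simp)
  have mle: "m \<le> G u $ i" for i unfolding m_def by simp
  have Mle: "\<bar>T u $ i\<bar> \<le> M" for i unfolding M_def
    by (rule member_le_sum) auto
  have bound: "(T u \<bullet> \<psi>) / (G u \<bullet> \<psi>) \<ge> - M / m" if "\<psi> \<in> Sigma_cone" for \<psi>
  proof -
    have nn: "\<psi> $ i \<ge> 0" for i using that by (simp add: Sigma_cone_def)
    define s where "s = (\<Sum>i\<in>UNIV. \<psi> $ i)"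
    have a: "T u \<bullet> \<psi> \<ge> - M * s"
    proof -
      have "T u \<bullet> \<psi> = (\<Sum>i\<in>UNIV. T u $ i * \<psi> $ i)" by (simp add: inner_vec_def)
      also have "\<dots> \<ge> (\<Sum>i\<in>UNIV. - M * \<psi> $ i)"
      proof (rule sum_mono)
        fix i
        have "- M \<le> T u $ i" using Mle[of i] by linarith
        then show "- M * \<psi> $ i \<le> T u $ i * \<psi> $ i" using nn[of i] by (rule mult_right_mono)
      qed
      finally show ?thesis by (simp add: s_def sum_distrib_left)
    qed
    have b: "G u \<bullet> \<psi> \<ge> m * s"
    proof -
      have "(\<Sum>i\<in>UNIV. m * \<psi> $ i) \<le> (\<Sum>i\<in>UNIV. G u $ i * \<psi> $ i)"
        by (rule sum_mono, rule mult_right_mono[OF mle nn])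
      then show ?thesis by (simp add: inner_vec_def s_def sum_distrib_left)
    qed
    have bp: "G u \<bullet> \<psi> > 0" using pos that by blast
    have Mnn: "M \<ge> 0" using Mle[of undefined] by linarith
    have "s \<le> (G u \<bullet> \<psi>) / m" using b mpos by (simp add: field_simps)
    hence "M * s \<le> M * ((G u \<bullet> \<psi>) / m)" using Mnn by (rule mult_left_mono)
    hence "T u \<bullet> \<psi> \<ge> - M / m * (G u \<bullet> \<psi>)" using a by (simp add: field_simps)
    thus ?thesis using bp by (simp add: field_simps)
  qed
  have "ereal (- M / m) \<le> lam T G u"
    unfolding lam_def by (rule INF_greatest) (use bound in auto)
  thus ?thesis by (metis MInfty_neq_ereal(1) ereal_infty_less(2) order_less_le_trans)
qed

lemma C1_cont: "C1_map F \<Longrightarrow> isCont F x"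
  unfolding C1_map_def by (auto intro: has_derivative_continuous)

theorem lemma2:
  fixes T G :: "real^'n \<Rightarrow> real^'n" and S :: "(real^'n) set"
  assumes "C1_map T" and "C1_map G"
    and "S \<noteq> {}" and "open S"
    and "\<And>u \<psi>. u \<in> S \<Longrightarrow> \<psi> \<in> Sigma_cone \<Longrightarrow> G u \<bullet> \<psi> > 0"
    and "hyp_H T G S"
  shows "- \<infinity> < lam_star T G S \<and> lam_star T G S < \<infinity>
         \<and> (\<exists>u\<in>S. lam T G u = lam_star T G S)"
proof -
  define L where "L = lam_star T G S"
  have Ldef: "L = Sup (lam T G ` S)" unfolding L_def lam_star_def by simp
  obtain u0 where u0: "u0 \<in> S" using assms(3) by blast
  have lu0: "lam T G u0 > -\<infinity>" using lam_lower[of G u0 T] assms(5) u0 by blast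
  have u0L: "lam T G u0 \<le> L" unfolding Ldef using u0 by (rule SUP_upper)
  obtain f where f: "incseq f" "range f \<subseteq> lam T G ` S" "Sup (lam T G ` S) = (SUP i. f i)"
    using Sup_countable_SUP[of "lam T G ` S"] assms(3) by blast
  define h where "h n = max (f n) (lam T G u0)" for n
  have hinc: "incseq h" using f(1) unfolding h_def incseq_def by (meson max.mono order_refl)
  have hS: "h n \<in> lam T G ` S" for n using f(2) u0 unfolding h_def max_def by auto
  have hL: "(SUP i. h i) = L"
  proof (rule antisym)
    show "(SUP i. h i) \<le> L" unfolding Ldef by (rule SUP_least) (use hS in \<open>auto intro: Sup_upper\<close>)
    show "L \<le> (SUP i. h i)" unfolding Ldef f(3) h_def
      by (rule SUP_mono) (use max.cobounded1 in blast)
  qed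
  obtain g where g: "\<And>n. g n \<in> S" "\<And>n. lam T G (g n) = h n"
  proof -
    have "\<forall>n. \<exists>u. u \<in> S \<and> lam T G u = h n" 
    proof
      fix n
      from hS[of n] obtain u where "u \<in> S" "h n = lam T G u" by (rule imageE)
      thus "\<exists>u. u \<in> S \<and> lam T G u = h n" by auto
    qed
    from choice[OF this] obtain g where "\<forall>n. g n \<in> S \<and> lam T G (g n) = h n" by auto
    thus ?thesis by (intro that) auto
  qed
  define A where "A = {u\<in>S. lam T G u \<ge> lam T G u0}"
  have Hb: "bounded A" "closure A \<subseteq> S" using assms(6) u0 unfolding hyp_H_def A_def by auto
  have cA: "compact (closure A)" using Hb(1) by (simp add: compact_closure)
  have gA: "g n \<in> closure A" for n
  proof -
    have "lam T G u0 \<le> lam T G (g n)" unfolding g(2) h_def by simp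
    hence "g n \<in> A" unfolding A_def using g(1) by simp
    thus ?thesis using closure_subset by blast
  qed
  have ex: "\<exists>l\<in>closure A. \<exists>r::nat\<Rightarrow>nat. strict_mono r \<and> (g \<circ> r) \<longlonglongrightarrow> l"
    using cA gA unfolding compact_def by simp
  then obtain l r where l: "l \<in> closure A" "strict_mono r" "(g \<circ> r) \<longlonglongrightarrow> l"
    by (elim bexE exE conjE) simp
  have lS: "l \<in> S" using l(1) Hb(2) by blast
  have hl: "h m \<le> lam T G l" for m
    unfolding lam_def
  proof (rule INF_greatest)
    fix \<psi> :: "real^'n" assume psi: "\<psi> \<in> Sigma_cone"
    have tT: "(\<lambda>k. T (g (r k))) \<longlonglongrightarrow> T l"
      using isCont_tendsto_compose[OF C1_cont[OF assms(1)] l(3)] by (simp add: o_def)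
    have tG: "(\<lambda>k. G (g (r k))) \<longlonglongrightarrow> G l"
      using isCont_tendsto_compose[OF C1_cont[OF assms(2)] l(3)] by (simp add: o_def)
    have Gl: "G l \<bullet> \<psi> \<noteq> 0" using assms(5)[OF lS psi] by simp
    have tR: "(\<lambda>k. ereal ((T (g (r k)) \<bullet> \<psi>) / (G (g (r k)) \<bullet> \<psi>)))
               \<longlonglongrightarrow> ereal ((T l \<bullet> \<psi>) / (G l \<bullet> \<psi>))"
      by (intro tendsto_intros tT tG Gl)
    have ev: "\<forall>\<^sub>F k in sequentially. h m \<le> ereal ((T (g (r k)) \<bullet> \<psi>) / (G (g (r k)) \<bullet> \<psi>))"
    proof (rule eventually_sequentiallyI[of m])
      fix k assume "m \<le> k"
      hence "m \<le> r k" using seq_suble[OF l(2), of k] by linarith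
      hence "h m \<le> h (r k)" using hinc by (simp add: incseq_def)
      also have "\<dots> = lam T G (g (r k))" using g(2) by simp
      also have "\<dots> \<le> ereal ((T (g (r k)) \<bullet> \<psi>) / (G (g (r k)) \<bullet> \<psi>))"
        unfolding lam_def using psi by (rule INF_lower)
      finally show "h m \<le> ereal ((T (g (r k)) \<bullet> \<psi>) / (G (g (r k)) \<bullet> \<psi>))" .
    qed
    show "h m \<le> ereal ((T l \<bullet> \<psi>) / (G l \<bullet> \<psi>))"
      by (rule tendsto_lowerbound[OF tR ev]) simp
  qed
  have lL: "lam T G l = L"
  proof (rule antisym)
    show "lam T G l \<le> L" unfolding Ldef using lS by (rule SUP_upper)
    show "L \<le> lam T G l" unfolding hL[symmetric] by (rule SUP_least) (rule hl)
  qed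
  have "lam T G l \<le> ereal ((T l \<bullet> 1) / (G l \<bullet> 1))"
    unfolding lam_def by (rule INF_lower) (rule one_in_cone)
  hence "lam T G l < \<infinity>" by (rule order_le_less_trans) simp
  hence "L < \<infinity>" using lL by simp
  moreover have "-\<infinity> < L" using lu0 u0L by (rule order_less_le_trans)
  ultimately show ?thesis using lL lS unfolding L_def by blast
qed

end
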